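(* Let $n\ge 0$ and $i,j,a,b\in D$ with $a\neq b$, $a\Rightarrow_n b$, $A_i(a)=1$ and $A_j(a)=0$. Define the vector $A_i^*=s_{ab}A_i\in\{0,1\}^D$ by $A_i^*(m)=A_i(m)$ for $m\notin\{a,b\}$, $A_i^*(a)=0$, $A_i^*(b)=1$. If $A_i^*\le A_j$ entrywise, then $i\Rightarrow_{n+1} j$.
   Context: Fix integers $k\ge1$, $d\ge1$, $K=\{1,\dots,k\}$, $D=\{1,\dots,d\}$. The $k$-tree is the set $K^*$ of finite words over $K$ with root the empty word $\epsilon$; $xg$ ($g\in K$) are the children of $x$. $L_n$ is the set of words of length exactly $n$ and $\Delta_n$ the set of words of length at most $n$. $A$ is a $d\times d$ matrix with entries in $\{0,1\}$, and $A_i=(A(i,1),\dots,A(i,d))$ denotes row $i$, with $A_i(m)=A(i,m)$. A (valid) labeling of $\Delta_n$ is a map $\lambda:\Delta_n\to D$ with $A(\lambda(x),\lambda(xg))=1$ for all $x\in\Delta_{n-1}$, $g\in K$. For $p,q\in D$, $p\Rightarrow_n q$ means: for every valid labeling $\lambda$ of $\Delta_n$ with $\lambda(\epsilon)=p$ there is a valid labeling $\lambda'$ of $\Delta_n$ with $\lambda'(\epsilon)=q$ and $\lambda'|_{L_n}=\lambda|_{L_n}$. *)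

theory Defs
  imports Main
begin

text \<open>Words over K = {1..k} are lists of naturals with entries in {1..k};
  the child xg of x is x @ [g]. The 0/1 matrix A is a
  function nat => nat => nat (entries assumed to lie in {0,1} on D x D).\<close>

definition word :: "nat \<Rightarrow> nat list \<Rightarrow> bool" where
  "word k x \<longleftrightarrow> set x \<subseteq> {1..k}"

definition valid_labeling ::
  "nat \<Rightarrow> nat \<Rightarrow> (nat \<Rightarrow> nat \<Rightarrow> nat) \<Rightarrow> nat \<Rightarrow> (nat list \<Rightarrow> nat) \<Rightarrow> bool" where
  "valid_labeling k d A n lam \<longleftrightarrow>
     (\<forall>x. word k x \<and> length x \<le> n \<longrightarrow> lam x \<in> {1..d}) \<and>
     (\<forall>x g. word k x \<and> length x < n \<and> g \<in> {1..k} \<longrightarrow> A (lam x) (lam (x @ [g])) = 1)"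

definition implies_n ::
  "nat \<Rightarrow> nat \<Rightarrow> (nat \<Rightarrow> nat \<Rightarrow> nat) \<Rightarrow> nat \<Rightarrow> nat \<Rightarrow> nat \<Rightarrow> bool" where
  "implies_n k d A n p q \<longleftrightarrow>
     (\<forall>lam. valid_labeling k d A n lam \<and> lam [] = p \<longrightarrow>
        (\<exists>lam'. valid_labeling k d A n lam' \<and> lam' [] = q \<and>
           (\<forall>x. word k x \<and> length x = n \<longrightarrow> lam' x = lam x)))"

definition swap_ab :: "nat \<Rightarrow> nat \<Rightarrow> (nat \<Rightarrow> nat) \<Rightarrow> nat \<Rightarrow> nat" where
  "swap_ab a b v m = (if m = a then 0 else if m = b then 1 else v m)"

end

theory Submission
  imports Defs
begin

theorem proposition3p4:
  fixes k d n i j a b :: nat and A :: "nat \<Rightarrow> nat \<Rightarrow> nat"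
  assumes "k \<ge> 1" and "d \<ge> 1"
    and "\<forall>p\<in>{1..d}. \<forall>q\<in>{1..d}. A p q \<in> {0, 1}"
    and "i \<in> {1..d}" and "j \<in> {1..d}" and "a \<in> {1..d}" and "b \<in> {1..d}"
    and "a \<noteq> b"
    and "implies_n k d A n a b"
    and "A i a = 1" and "A j a = 0"
    and "\<forall>m\<in>{1..d}. swap_ab a b (A i) m \<le> A j m"
  shows "implies_n k d A (n + 1) i j"
  unfolding implies_n_def
proof (intro allI impI)
  fix lam assume H: "valid_labeling k d A (n + 1) lam \<and> lam [] = i"
  have V1: "\<And>x. word k x \<Longrightarrow> length x \<le> n + 1 \<Longrightarrow> lam x \<in> {1..d}"
    and V2: "\<And>x g. word k x \<Longrightarrow> length x < n + 1 \<Longrightarrow> g \<in> {1..k} \<Longrightarrow> A (lam x) (lam (x @ [g])) = 1"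
    using H unfolding valid_labeling_def by auto
  have wc: "word k (g # y) \<longleftrightarrow> g \<in> {1..k} \<and> word k y" for g y
    unfolding word_def by auto
  have "\<forall>g. \<exists>M. g \<in> {1..k} \<and> lam [g] = a \<longrightarrow>
      valid_labeling k d A n M \<and> M [] = b \<and> (\<forall>x. word k x \<and> length x = n \<longrightarrow> M x = lam (g # x))"
  proof
    fix g
    show "\<exists>M. g \<in> {1..k} \<and> lam [g] = a \<longrightarrow>
      valid_labeling k d A n M \<and> M [] = b \<and> (\<forall>x. word k x \<and> length x = n \<longrightarrow> M x = lam (g # x))"
    proof (cases "g \<in> {1..k} \<and> lam [g] = a")
      case True
      have "valid_labeling k d A n (\<lambda>x. lam (g # x))"
        unfolding valid_labeling_def
      proof (intro conjI allI impI)
        fix x assume "word k x \<and> length x \<le> n"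
        then show "lam (g # x) \<in> {1..d}" using V1[of "g # x"] True wc by auto
      next
        fix x h assume "word k x \<and> length x < n \<and> h \<in> {1..k}"
        then show "A (lam (g # x)) (lam (g # x @ [h])) = 1" using V2[of "g # x" h] True wc by auto
      qed
      with True assms(9) show ?thesis unfolding implies_n_def by auto
    qed auto
  qed
  then obtain M where M: "\<And>g. g \<in> {1..k} \<Longrightarrow> lam [g] = a \<Longrightarrow>
      valid_labeling k d A n (M g) \<and> M g [] = b \<and> (\<forall>x. word k x \<and> length x = n \<longrightarrow> M g x = lam (g # x))"
    by metis
  have M1: "\<And>g x. g \<in> {1..k} \<Longrightarrow> lam [g] = a \<Longrightarrow> word k x \<Longrightarrow> length x \<le> n \<Longrightarrow> M g x \<in> {1..d}"
    and M2: "\<And>g x h. g \<in> {1..k} \<Longrightarrow> lam [g] = a \<Longrightarrow> word k x \<Longrightarrow> length x < n \<Longrightarrow> h \<in> {1..k} \<Longrightarrow> A (M g x) (M g (x @ [h])) = 1"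
    using M unfolding valid_labeling_def by blast+
  have Ajb: "A j b = 1"
  proof -
    have "swap_ab a b (A i) b = 1" using assms(8) unfolding swap_ab_def by auto
    then show ?thesis using assms(12,3,5,7) by force
  qed
  have Ajc: "A j c = 1" if "c \<in> {1..d}" "A i c = 1" "c \<noteq> a" for c
  proof (cases "c = b")
    case True then show ?thesis using Ajb by simp
  next
    case False
    have "swap_ab a b (A i) c = 1" using that False unfolding swap_ab_def by auto
    then show ?thesis using assms(12,3,5) that by force
  qed
  define lam' where "lam' x = (if x = [] then j else if lam [hd x] = a then M (hd x) (tl x) else lam x)" for x
  show "\<exists>lam'. valid_labeling k d A (n + 1) lam' \<and> lam' [] = j \<and>
           (\<forall>x. word k x \<and> length x = n + 1 \<longrightarrow> lam' x = lam x)"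
  proof (intro exI conjI allI impI)
    show "lam' [] = j" unfolding lam'_def by simp
  next
    fix x assume xw: "word k x \<and> length x = n + 1"
    then obtain g y where x: "x = g # y" by (cases x) auto
    show "lam' x = lam x" using xw M[of g] wc unfolding lam'_def x by auto
  next
    show "valid_labeling k d A (n + 1) lam'"
      unfolding valid_labeling_def
    proof (intro conjI allI impI)
      fix x assume xw: "word k x \<and> length x \<le> n + 1"
      show "lam' x \<in> {1..d}"
      proof (cases x)
        case Nil then show ?thesis using assms(5) unfolding lam'_def by simp
      next
        case (Cons g y) then show ?thesis using xw M1[of g y] V1[of x] wc unfolding lam'_def by auto
      qed
    next
      fix x h assume xw: "word k x \<and> length x < n + 1 \<and> h \<in> {1..k}"
      show "A (lam' x) (lam' (x @ [h])) = 1"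
      proof (cases x)
        case Nil
        show ?thesis
        proof (cases "lam [h] = a")
          case True
          then show ?thesis using Nil M[of h] xw Ajb unfolding lam'_def by auto
        next
          case False
          have "A i (lam [h]) = 1" using V2[of "[]" h] H xw unfolding word_def by auto
          moreover have "lam [h] \<in> {1..d}" using V1[of "[h]"] xw unfolding word_def by auto
          ultimately show ?thesis using Nil False Ajc unfolding lam'_def by auto
        qed
      next
        case (Cons g y)
        then show ?thesis using xw M2[of g y h] V2[of x h] wc unfolding lam'_def by auto
      qed
    qed
  qed
qed

end
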